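(* Let $G$ be a finite connected graph of diameter $2$. If $G$ is Bonnet–Myers sharp, then $G$ is isomorphic to the cocktail party graph $CP(m)$ for some $m\ge 2$. Conversely, every $CP(m)$ with $m\ge2$ is a Bonnet–Myers sharp graph of diameter $2$.
   Context: All graphs are finite, simple, connected and undirected, with the combinatorial shortest-path distance $d$. For $V=\{v_1,\dots,v_n\}$, $D=(d(v_i,v_j))_{i,j=1}^n$ is the distance matrix and $\mathbf{1}_n$ the all-ones column vector. When $DK=n\mathbf{1}_n$ has solutions, the Steinerberger curvature is a solution $K$ for which $\min_iK_i$ is maximal among all solutions. $G$ is Bonnet–Myers sharp if $DK=n\mathbf{1}_n$ has a solution and its Steinerberger curvature $K$ satisfies $\min_iK_i=2/\mathrm{diam}(G)$. The cocktail party graph $CP(m)$ is the complete graph $K_{2m}$ with the edges of a perfect matching removed. *)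

theory Defs
  imports Complex_Main
begin

definition simple_graph :: "'a set \<Rightarrow> ('a \<Rightarrow> 'a \<Rightarrow> bool) \<Rightarrow> bool" where
  "simple_graph V E \<longleftrightarrow> finite V \<and> V \<noteq> {} \<and>
     (\<forall>x y. E x y \<longrightarrow> x \<in> V \<and> y \<in> V) \<and>
     (\<forall>x y. E x y \<longrightarrow> E y x) \<and> (\<forall>x. \<not> E x x)"

definition walk_of_len :: "'a set \<Rightarrow> ('a \<Rightarrow> 'a \<Rightarrow> bool) \<Rightarrow> nat \<Rightarrow> 'a \<Rightarrow> 'a \<Rightarrow> bool" where
  "walk_of_len V E n x y \<longleftrightarrow> (\<exists>p::nat \<Rightarrow> 'a. p 0 = x \<and> p n = y \<and>
      (\<forall>i\<le>n. p i \<in> V) \<and> (\<forall>i<n. E (p i) (p (Suc i))))"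

definition connected_graph :: "'a set \<Rightarrow> ('a \<Rightarrow> 'a \<Rightarrow> bool) \<Rightarrow> bool" where
  "connected_graph V E \<longleftrightarrow> (\<forall>x\<in>V. \<forall>y\<in>V. \<exists>n. walk_of_len V E n x y)"

definition gdist :: "'a set \<Rightarrow> ('a \<Rightarrow> 'a \<Rightarrow> bool) \<Rightarrow> 'a \<Rightarrow> 'a \<Rightarrow> nat" where
  "gdist V E x y = (LEAST n. walk_of_len V E n x y)"

definition diam :: "'a set \<Rightarrow> ('a \<Rightarrow> 'a \<Rightarrow> bool) \<Rightarrow> nat" where
  "diam V E = Max {gdist V E x y | x y. x \<in> V \<and> y \<in> V}"

definition curv_solution :: "'a set \<Rightarrow> ('a \<Rightarrow> 'a \<Rightarrow> bool) \<Rightarrow> ('a \<Rightarrow> real) \<Rightarrow> bool" where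
  "curv_solution V E K \<longleftrightarrow>
     (\<forall>i\<in>V. (\<Sum>j\<in>V. real (gdist V E i j) * K j) = real (card V))"

definition steinerberger_curvature :: "'a set \<Rightarrow> ('a \<Rightarrow> 'a \<Rightarrow> bool) \<Rightarrow> ('a \<Rightarrow> real) \<Rightarrow> bool" where
  "steinerberger_curvature V E K \<longleftrightarrow> curv_solution V E K \<and>
     (\<forall>K'. curv_solution V E K' \<longrightarrow> Min (K' ` V) \<le> Min (K ` V))"

definition bonnet_myers_sharp :: "'a set \<Rightarrow> ('a \<Rightarrow> 'a \<Rightarrow> bool) \<Rightarrow> bool" where
  "bonnet_myers_sharp V E \<longleftrightarrow> (\<exists>K. curv_solution V E K) \<and>
     (\<exists>K. steinerberger_curvature V E K \<and> Min (K ` V) = 2 / real (diam V E))"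

text \<open>Cocktail party graph CP(m): vertices 0..2m-1, pairs {2k,2k+1} form the removed
perfect matching.\<close>
definition cp_vertices :: "nat \<Rightarrow> nat set" where
  "cp_vertices m = {..<2*m}"

definition cp_edge :: "nat \<Rightarrow> nat \<Rightarrow> nat \<Rightarrow> bool" where
  "cp_edge m i j \<longleftrightarrow> i < 2*m \<and> j < 2*m \<and> i div 2 \<noteq> j div 2"

definition graph_iso :: "'a set \<Rightarrow> ('a \<Rightarrow> 'a \<Rightarrow> bool) \<Rightarrow> 'b set \<Rightarrow> ('b \<Rightarrow> 'b \<Rightarrow> bool) \<Rightarrow> bool" where
  "graph_iso V E W F \<longleftrightarrow> (\<exists>f. bij_betw f V W \<and> (\<forall>x\<in>V. \<forall>y\<in>V. E x y \<longleftrightarrow> F (f x) (f y)))"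

end

theory Submission
  imports Defs
begin

lemma walk0: "walk_of_len V E 0 x y \<longleftrightarrow> x = y \<and> x \<in> V"
proof
  assume "walk_of_len V E 0 x y" then show "x = y \<and> x \<in> V"
    unfolding walk_of_len_def by auto
next
  assume "x = y \<and> x \<in> V" then show "walk_of_len V E 0 x y"
    unfolding walk_of_len_def by (intro exI[of _ "\<lambda>_. x"]) auto
qed

lemma walk1: "walk_of_len V E 1 x y \<longleftrightarrow> E x y \<and> x \<in> V \<and> y \<in> V"
proof
  assume "walk_of_len V E 1 x y"
  then obtain p where "p 0 = x" "p 1 = y" "\<forall>i\<le>1. p i \<in> V" "\<forall>i<1. E (p i) (p (Suc i))"
    unfolding walk_of_len_def by blast
  then show "E x y \<and> x \<in> V \<and> y \<in> V" by fastforce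
next
  assume a: "E x y \<and> x \<in> V \<and> y \<in> V" then show "walk_of_len V E 1 x y"
    unfolding walk_of_len_def by (intro exI[of _ "\<lambda>i. if i = 0 then x else y"]) auto
qed

lemma walk2: "x \<in> V \<Longrightarrow> y \<in> V \<Longrightarrow> z \<in> V \<Longrightarrow> E x z \<Longrightarrow> E z y \<Longrightarrow> walk_of_len V E 2 x y"
  unfolding walk_of_len_def
  apply (intro exI[of _ "\<lambda>i. if i = 0 then x else if i = 1 then z else y"])
  by auto

lemma walk2_mid: "walk_of_len V E 2 x y \<Longrightarrow> \<exists>z. E x z \<and> E z y"
  unfolding walk_of_len_def
  by (metis One_nat_def Suc_1 lessI numeral_2_eq_2 zero_less_Suc)

lemma gdist_eqI: "walk_of_len V E n x y \<Longrightarrow> (\<And>k. k < n \<Longrightarrow> \<not> walk_of_len V E k x y) \<Longrightarrow> gdist V E x y = n"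
  unfolding gdist_def by (rule Least_equality) (auto simp: not_less[symmetric])

lemma gdist_walk: "\<exists>n. walk_of_len V E n x y \<Longrightarrow> walk_of_len V E (gdist V E x y) x y"
  unfolding gdist_def by (rule LeastI_ex)

lemma gdist0: "x \<in> V \<Longrightarrow> gdist V E x x = 0"
  by (rule gdist_eqI) (auto simp: walk0)

lemma gdist1: "simple_graph V E \<Longrightarrow> E x y \<Longrightarrow> gdist V E x y = 1"
  unfolding simple_graph_def
  using walk1[of V E x y] walk0[of V E x y] by (intro gdist_eqI) auto

lemma gdist2: "x \<in> V \<Longrightarrow> y \<in> V \<Longrightarrow> x \<noteq> y \<Longrightarrow> \<not> E x y \<Longrightarrow> walk_of_len V E 2 x y \<Longrightarrow> gdist V E x y = 2"
  apply (rule gdist_eqI, assumption)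
  using less_2_cases walk0 walk1 by (metis One_nat_def)

lemma rowsum:
  assumes "finite V" "\<And>j. j \<in> V \<Longrightarrow> gdist V E i j = (if j = i then 0 else if E i j then 1 else 2)"
  shows "(\<Sum>j\<in>V. real (gdist V E i j) * K j) =
     (\<Sum>j\<in>{j\<in>V. j \<noteq> i}. K j) + (\<Sum>j\<in>{j\<in>V. j \<noteq> i \<and> \<not> E i j}. K j)"
proof -
  have "(\<Sum>j\<in>V. real (gdist V E i j) * K j) =
     (\<Sum>j\<in>V. (if j \<noteq> i then K j else 0) + (if j \<noteq> i \<and> \<not> E i j then K j else 0))"
    by (rule sum.cong) (auto simp: assms(2))
  also have "\<dots> = (\<Sum>j\<in>V. if j \<noteq> i then K j else 0) + (\<Sum>j\<in>V. if j \<noteq> i \<and> \<not> E i j then K j else 0)"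
    by (rule sum.distrib)
  also have "\<dots> = (\<Sum>j\<in>{j\<in>V. j \<noteq> i}. K j) + (\<Sum>j\<in>{j\<in>V. j \<noteq> i \<and> \<not> E i j}. K j)"
    by (simp add: sum.inter_filter assms(1))
  finally show ?thesis .
qed


lemma dval_general:
  assumes sg: "simple_graph V E" and con: "connected_graph V E" and le2: "gdist V E i j \<le> 2"
    and iV: "i \<in> V" and jV: "j \<in> V"
  shows "gdist V E i j = (if j = i then 0 else if E i j then 1 else 2)"
proof -
  have w: "walk_of_len V E (gdist V E i j) i j"
    using con iV jV unfolding connected_graph_def by (intro gdist_walk) blast
  show ?thesis
  proof (cases "j = i")
    case True then show ?thesis using gdist0 iV by simp
  next
    case False
    show ?thesis
    proof (cases "E i j")
      case True then show ?thesis using gdist1[OF sg] False by simp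
    next
      case F: False
      have "gdist V E i j \<noteq> 0"
      proof
        assume h: "gdist V E i j = 0"
        from w have "walk_of_len V E 0 i j" by (simp only: h)
        then show False using False by (simp add: walk0)
      qed
      moreover have "gdist V E i j \<noteq> 1"
      proof
        assume h: "gdist V E i j = 1"
        from w have "walk_of_len V E 1 i j" by (simp only: h)
        then show False using F walk1[of V E i j] by simp
      qed
      ultimately show ?thesis using le2 False F by simp
    qed
  qed
qed

lemma diam_facts:
  assumes sg: "simple_graph V E" and dm: "diam V E = 2"
  shows "\<forall>x\<in>V. \<forall>y\<in>V. gdist V E x y \<le> 2" "\<exists>x\<in>V. \<exists>y\<in>V. gdist V E x y = 2"
proof -
  let ?S = "{gdist V E x y | x y. x \<in> V \<and> y \<in> V}"
  have fin: "finite V" "V \<noteq> {}" using sg unfolding simple_graph_def by auto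
  have sub: "?S \<subseteq> (\<lambda>p. gdist V E (fst p) (snd p)) ` (V \<times> V)"
  proof
    fix g assume "g \<in> ?S"
    then obtain x y where g: "g = gdist V E x y" "x \<in> V" "y \<in> V" by blast
    show "g \<in> (\<lambda>p. gdist V E (fst p) (snd p)) ` (V \<times> V)"
      by (rule image_eqI[of _ _ "(x, y)"]) (use g in auto)
  qed
  have fS: "finite ?S" by (rule finite_subset[OF sub]) (use fin in simp)
  have mx: "Max ?S = 2" using dm unfolding diam_def .
  show "\<forall>x\<in>V. \<forall>y\<in>V. gdist V E x y \<le> 2"
  proof (intro ballI)
    fix x y assume "x \<in> V" "y \<in> V"
    then have "gdist V E x y \<in> ?S" by blast
    from Max_ge[OF fS this] show "gdist V E x y \<le> 2" unfolding mx .
  qed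
  obtain x where "x \<in> V" using fin by blast
  then have neS: "?S \<noteq> {}" by blast
  have "Max ?S \<in> ?S" by (rule Max_in[OF fS neS])
  then obtain x y where "2 = gdist V E x y" "x \<in> V" "y \<in> V" unfolding mx by blast
  then show "\<exists>x\<in>V. \<exists>y\<in>V. gdist V E x y = 2" by metis
qed

lemma dir1:
  fixes V :: "'a set"
  assumes sg: "simple_graph V E" and con: "connected_graph V E" and dm: "diam V E = 2"
    and bm: "bonnet_myers_sharp V E"
  shows "\<exists>m\<ge>2. graph_iso V E (cp_vertices m) (cp_edge m)"
proof -
  have fin: "finite V" and ne: "V \<noteq> {}" and inV: "\<And>x y. E x y \<Longrightarrow> x \<in> V \<and> y \<in> V"
    and sym: "\<And>x y. E x y \<Longrightarrow> E y x" and irr: "\<And>x. \<not> E x x"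
    using sg unfolding simple_graph_def by auto
  have dval: "\<And>i j. i \<in> V \<Longrightarrow> j \<in> V \<Longrightarrow> gdist V E i j = (if j = i then 0 else if E i j then 1 else 2)"
    using dval_general[OF sg con] diam_facts(1)[OF sg dm] by blast
  obtain x0 y0 where x0: "x0 \<in> V" and y0: "y0 \<in> V" and d2: "gdist V E x0 y0 = 2"
    using diam_facts(2)[OF sg dm] by blast
  have x0y0: "x0 \<noteq> y0" "\<not> E x0 y0" using dval[OF x0 y0] d2 by (auto split: if_splits)
  obtain K where sc: "steinerberger_curvature V E K" and mn: "Min (K ` V) = 2 / real (diam V E)"
    using bm unfolding bonnet_myers_sharp_def by blast
  have Kge: "\<And>j. j \<in> V \<Longrightarrow> K j \<ge> 1"
  proof -
    fix j assume "j \<in> V"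
    then have "Min (K ` V) \<le> K j" using fin by (intro Min_le) auto
    then show "K j \<ge> 1" using mn dm by simp
  qed
  have sol: "\<And>i. i \<in> V \<Longrightarrow> (\<Sum>j\<in>V. real (gdist V E i j) * K j) = real (card V)"
    using sc unfolding steinerberger_curvature_def curv_solution_def by blast
  define N where "N i = {j\<in>V. j \<noteq> i \<and> \<not> E i j}" for i
  define A where "A i = {j\<in>V. j \<noteq> i}" for i
  have finA: "finite (A i)" "finite (N i)" for i unfolding A_def N_def using fin by auto
  have cardA: "real (card (A i)) = real (card V) - 1" if "i \<in> V" for i
  proof -
    have "A i = V - {i}" unfolding A_def by auto
    then have "card (A i) = card V - 1" using that fin by simp
    moreover have "card V \<ge> 1" using that fin by (metis One_nat_def Suc_leI card_gt_0_iff empty_iff)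
    ultimately show ?thesis by simp
  qed
  have rs: "(\<Sum>j\<in>V. real (gdist V E i j) * K' j) = (\<Sum>j\<in>A i. K' j) + (\<Sum>j\<in>N i. K' j)"
    if "i \<in> V" for i K'
    unfolding A_def N_def by (rule rowsum[OF fin]) (rule dval[OF that])
  have sum_split: "(\<Sum>j\<in>B. K j) = (\<Sum>j\<in>B. K j - 1) + real (card B)" if "finite B" for B
    using that by (simp add: sum_subtractf)
  have one: "\<forall>j\<in>V. j \<noteq> x \<longrightarrow> K j = 1" if xV: "x \<in> V" and Nne: "N x \<noteq> {}" for x
  proof -
    have c1: "card (N x) \<ge> 1" using Nne finA(2) by (metis One_nat_def Suc_leI card_gt_0_iff)
    have nA: "(\<Sum>j\<in>A x. K j - 1) \<ge> 0" using Kge unfolding A_def by (intro sum_nonneg) auto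
    have nN: "(\<Sum>j\<in>N x. K j - 1) \<ge> 0" using Kge unfolding N_def by (intro sum_nonneg) auto
    have "real (card V) = (\<Sum>j\<in>A x. K j - 1) + (real (card V) - 1) + ((\<Sum>j\<in>N x. K j - 1) + real (card (N x)))"
      using sol[OF xV] rs[OF xV, of K] sum_split[OF finA(1)] sum_split[OF finA(2)] cardA[OF xV] by simp
    then have "(\<Sum>j\<in>A x. K j - 1) = 0" using nA nN c1 by linarith
    then have "\<forall>j\<in>A x. K j - 1 = 0" using Kge finA(1) by (subst (asm) sum_nonneg_eq_0_iff) (auto simp: A_def)
    then show ?thesis unfolding A_def by auto
  qed
  have K1: "\<And>j. j \<in> V \<Longrightarrow> K j = 1"
  proof -
    fix j assume jV: "j \<in> V"
    have "N x0 \<noteq> {}" using y0 x0y0 unfolding N_def by auto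
    moreover have "N y0 \<noteq> {}" using x0 x0y0 sym unfolding N_def by auto
    ultimately show "K j = 1" using one[OF x0] one[OF y0] jV x0y0 by metis
  qed
  have cN: "card (N i) = 1" if iV: "i \<in> V" for i
  proof -
    have "real (card V) = real (card V) - 1 + real (card (N i))"
      using sol[OF iV] rs[OF iV, of K] cardA[OF iV] K1 unfolding A_def N_def by simp
    then show ?thesis by simp
  qed
  define \<sigma> where "\<sigma> i = the_elem (N i)" for i
  have sig: "\<sigma> i \<in> V \<and> \<sigma> i \<noteq> i \<and> \<not> E i (\<sigma> i) \<and> (\<forall>j\<in>V. j \<noteq> i \<and> \<not> E i j \<longrightarrow> j = \<sigma> i)"
    if iV: "i \<in> V" for i
  proof -
    obtain a where a: "N i = {a}" using cN[OF iV] by (rule card_1_singletonE)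
    have sa: "\<sigma> i = a" using a unfolding \<sigma>_def by simp
    have aN: "a \<in> N i" using a by simp
    have u: "\<forall>j\<in>V. j \<noteq> i \<and> \<not> E i j \<longrightarrow> j = a"
    proof (intro ballI impI)
      fix j assume "j \<in> V" "j \<noteq> i \<and> \<not> E i j"
      then have "j \<in> N i" unfolding N_def by simp
      then show "j = a" using a by simp
    qed
    show ?thesis using aN u unfolding sa N_def by simp
  qed
  have sigsig: "\<sigma> (\<sigma> i) = i" if iV: "i \<in> V" for i
  proof -
    have s: "\<sigma> i \<in> V" "\<sigma> i \<noteq> i" "\<not> E i (\<sigma> i)" using sig[OF iV] by auto
    have "\<not> E (\<sigma> i) i" using s(3) sym by blast
    have "\<forall>j\<in>V. j \<noteq> \<sigma> i \<and> \<not> E (\<sigma> i) j \<longrightarrow> j = \<sigma> (\<sigma> i)" using sig[OF s(1)] by blast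
    moreover have "i \<noteq> \<sigma> i" using s(2) by simp
    ultimately have "i = \<sigma> (\<sigma> i)" using iV \<open>\<not> E (\<sigma> i) i\<close> by blast
    then show ?thesis by simp
  qed
  have Eiff: "E i j \<longleftrightarrow> j \<noteq> i \<and> j \<noteq> \<sigma> i" if "i \<in> V" "j \<in> V" for i j
  proof
    assume e: "E i j"
    then have "j \<noteq> i" using irr by auto
    moreover have "j \<noteq> \<sigma> i" using e sig[OF that(1)] by auto
    ultimately show "j \<noteq> i \<and> j \<noteq> \<sigma> i" by simp
  next
    assume "j \<noteq> i \<and> j \<noteq> \<sigma> i"
    then show "E i j" using sig[OF that(1)] that(2) by blast
  qed
  define pr where "pr i = {i, \<sigma> i}" for i
  define P where "P = pr ` V"
  have prz: "pr z = pr i" if "i \<in> V" "z \<in> pr i" for i z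
  proof -
    from that(2) have "z = i \<or> z = \<sigma> i" by (simp add: pr_def)
    then show ?thesis
    proof
      assume "z = i" then show ?thesis by simp
    next
      assume "z = \<sigma> i" then show ?thesis using sigsig[OF that(1)] unfolding pr_def by auto
    qed
  qed
  have prV: "pr i \<subseteq> V" if "i \<in> V" for i using sig[OF that] that unfolding pr_def by auto
  have UP: "\<Union>P = V" unfolding P_def using prV unfolding pr_def by auto
  have finP: "finite P" unfolding P_def using fin by simp
  have "2 * card P = card (\<Union>P)"
  proof (rule card_partition)
    show "finite P" by (rule finP)
    show "finite (\<Union>P)" using UP fin by simp
    show "card c = 2" if "c \<in> P" for c
    proof -
      from that obtain i where i: "i \<in> V" "c = pr i" unfolding P_def by blast
      have "\<sigma> i \<noteq> i" using sig[OF i(1)] by blast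
      then show "card c = 2" unfolding i(2) pr_def by simp
    qed
    show "c1 \<inter> c2 = {}" if c1: "c1 \<in> P" and c2: "c2 \<in> P" and ne: "c1 \<noteq> c2" for c1 c2
    proof -
      obtain i where i: "i \<in> V" "c1 = pr i" using c1 unfolding P_def by blast
      obtain j where j: "j \<in> V" "c2 = pr j" using c2 unfolding P_def by blast
      show ?thesis
      proof (rule ccontr)
        assume "c1 \<inter> c2 \<noteq> {}"
        then obtain w where "w \<in> pr i" "w \<in> pr j" using i j by blast
        then have "pr w = pr i" "pr w = pr j" using prz[OF i(1)] prz[OF j(1)] by blast+
        then show False using ne i j by simp
      qed
    qed
  qed
  then have cV: "card V = 2 * card P" using UP by simp
  define m where "m = card P"
  have "\<exists>n. walk_of_len V E n x0 y0" using con x0 y0 unfolding connected_graph_def by blast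
  then have "walk_of_len V E (gdist V E x0 y0) x0 y0" by (rule gdist_walk)
  then have "walk_of_len V E 2 x0 y0" by (simp only: d2)
  from walk2_mid[OF this] obtain z where z: "E x0 z" "E z y0" by auto
  have "{x0, y0, z} \<subseteq> V" using x0 y0 inV z by auto
  moreover have "z \<noteq> x0" "z \<noteq> y0" using z irr by auto
  moreover have "card {x0, y0, z} = 3" using x0y0 calculation(2,3) by (simp add: card_insert_if)
  ultimately have "card V \<ge> 3" using fin by (metis card_mono)
  then have m2: "m \<ge> 2" using cV unfolding m_def by linarith
  obtain h where h: "bij_betw h P {0..<m}" using ex_bij_betw_finite_nat[OF finP] unfolding m_def by blast
  define rep where "rep p = (SOME z. z \<in> p)" for p :: "'a set"
  have rep: "rep (pr i) \<in> pr i" for i unfolding rep_def pr_def by (rule someI[of _ i]) simp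
  define f where "f i = 2 * h (pr i) + (if i = rep (pr i) then 0 else 1)" for i
  have hlt: "h (pr i) < m" if "i \<in> V" for i
    using h that unfolding P_def bij_betw_def by auto
  have fdiv: "f i div 2 = h (pr i)" for i unfolding f_def by simp
  have fmod: "f i mod 2 = (if i = rep (pr i) then 0 else 1)" for i unfolding f_def by simp
  have flt: "f i < 2 * m" if "i \<in> V" for i using hlt[OF that] unfolding f_def by simp
  have prEq: "pr i = pr j \<longleftrightarrow> j = i \<or> j = \<sigma> i" if "i \<in> V" "j \<in> V" for i j
  proof
    assume e: "pr i = pr j"
    have "j \<in> pr j" unfolding pr_def by simp
    then have "j \<in> pr i" using e by simp
    then show "j = i \<or> j = \<sigma> i" unfolding pr_def by simp
  next
    assume "j = i \<or> j = \<sigma> i"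
    then have "j \<in> pr i" unfolding pr_def by blast
    then show "pr i = pr j" using prz[OF that(1)] by simp
  qed
  have injh: "inj_on h P" using h unfolding bij_betw_def by simp
  have hEq: "h (pr i) = h (pr j) \<longleftrightarrow> pr i = pr j" if "i \<in> V" "j \<in> V" for i j
  proof
    assume "h (pr i) = h (pr j)"
    moreover have "pr i \<in> P" "pr j \<in> P" unfolding P_def using that by simp_all
    ultimately show "pr i = pr j" using inj_onD[OF injh] by simp
  qed simp
  have inj: "inj_on f V"
  proof (rule inj_onI)
    fix i j assume iV: "i \<in> V" and jV: "j \<in> V" and fe: "f i = f j"
    have "f i div 2 = f j div 2" using fe by simp
    then have "h (pr i) = h (pr j)" by (simp only: fdiv)
    then have pe: "pr i = pr j" using hEq[OF iV jV] by simp
    have "f i mod 2 = f j mod 2" using fe by simp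
    then have bits: "(i = rep (pr i)) = (j = rep (pr j))" unfolding fmod by (simp split: if_splits)
    have r: "rep (pr i) = i \<or> rep (pr i) = \<sigma> i" using rep[of i] unfolding pr_def by simp
    have "j = i \<or> j = \<sigma> i" using pe prEq[OF iV jV] by simp
    then show "i = j"
    proof
      assume ji: "j = \<sigma> i"
      have rr: "rep (pr j) = rep (pr i)" using pe by simp
      from r show "i = j"
      proof
        assume "rep (pr i) = i"
        then have "j = rep (pr j)" using bits by simp
        then show "i = j" using rr \<open>rep (pr i) = i\<close> by simp
      next
        assume "rep (pr i) = \<sigma> i"
        then have "j = rep (pr j)" using rr ji by simp
        then have "i = rep (pr i)" using bits by simp
        then show "i = j" using rr \<open>j = rep (pr j)\<close> by simp
      qed
    qed simp
  qed
  have img: "f ` V = {..<2*m}"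
  proof (rule card_subset_eq)
    show "finite {..<2*m}" by simp
    show "f ` V \<subseteq> {..<2*m}" using flt by auto
    show "card (f ` V) = card {..<2*m}" using card_image[OF inj] cV unfolding m_def by simp
  qed
  have "graph_iso V E (cp_vertices m) (cp_edge m)"
    unfolding graph_iso_def
  proof (intro exI conjI ballI)
    show "bij_betw f V (cp_vertices m)" unfolding bij_betw_def cp_vertices_def using inj img by simp
  next
    fix i j assume iV: "i \<in> V" and jV: "j \<in> V"
    have "E i j \<longleftrightarrow> \<not> (j = i \<or> j = \<sigma> i)" using Eiff[OF iV jV] by simp
    also have "\<dots> \<longleftrightarrow> pr i \<noteq> pr j" using prEq[OF iV jV] by simp
    also have "\<dots> \<longleftrightarrow> h (pr i) \<noteq> h (pr j)" using hEq[OF iV jV] by simp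
    also have "\<dots> \<longleftrightarrow> f i div 2 \<noteq> f j div 2" by (simp only: fdiv)
    also have "\<dots> \<longleftrightarrow> cp_edge m (f i) (f j)" using flt[OF iV] flt[OF jV] unfolding cp_edge_def by simp
    finally show "E i j = cp_edge m (f i) (f j)" .
  qed
  then show ?thesis using m2 by blast
qed


lemma cp_arith2: "(i::nat) < 2*m \<Longrightarrow> (j < 2*m \<and> j \<noteq> i \<and> \<not> (i < 2*m \<and> j < 2*m \<and> i div 2 \<noteq> j div 2)) \<longleftrightarrow> j = (if even i then i+1 else i-1)"
  by presburger

lemma cp_sg: "m \<ge> 1 \<Longrightarrow> simple_graph (cp_vertices m) (cp_edge m)"
  unfolding simple_graph_def cp_vertices_def cp_edge_def by (auto simp: lessThan_empty_iff)

lemma cp_arith: "(i::nat) < 2*m \<Longrightarrow> (j < 2*m \<and> j \<noteq> i \<and> j div 2 = i div 2) \<longleftrightarrow> j = (if even i then i+1 else i-1)"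
  by presburger

lemma cp_cases:
  assumes m: "m \<ge> 2" and i: "i < 2*m" and j: "j < 2*m"
  shows "j = i \<or> (cp_edge m i j) \<or> (j \<noteq> i \<and> \<not> cp_edge m i j \<and> walk_of_len (cp_vertices m) (cp_edge m) 2 i j)"
proof (cases "j = i \<or> cp_edge m i j")
  case True then show ?thesis by blast
next
  case False
  define z where "z = (if i div 2 = 0 then 2 else (0::nat))"
  have zl: "z < 2*m" unfolding z_def using m by simp
  have zd: "z div 2 = (if i div 2 = 0 then 1 else 0)" unfolding z_def by simp
  have ij: "i div 2 = j div 2" using False i j unfolding cp_edge_def by simp
  have "cp_edge m i z" "cp_edge m z j" unfolding cp_edge_def using zl zd i j ij by auto
  then have "walk_of_len (cp_vertices m) (cp_edge m) 2 i j"
    using walk2[of i "cp_vertices m" j z "cp_edge m"] zl i j unfolding cp_vertices_def by simp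
  then show ?thesis using False by simp
qed

lemma cp_dval:
  assumes m: "m \<ge> 2" and i: "i < 2*m" and j: "j < 2*m"
  shows "gdist (cp_vertices m) (cp_edge m) i j = (if j = i then 0 else if cp_edge m i j then 1 else 2)"
proof -
  have sg: "simple_graph (cp_vertices m) (cp_edge m)" using m by (intro cp_sg) simp
  have iV: "i \<in> cp_vertices m" and jV: "j \<in> cp_vertices m" using i j unfolding cp_vertices_def by simp_all
  from cp_cases[OF m i j] show ?thesis
  proof (elim disjE)
    assume "j = i" then show ?thesis using gdist0[OF iV] by simp
  next
    assume e: "cp_edge m i j"
    then have "j \<noteq> i" unfolding cp_edge_def by auto
    then show ?thesis using gdist1[OF sg e] e by simp
  next
    assume c: "j \<noteq> i \<and> \<not> cp_edge m i j \<and> walk_of_len (cp_vertices m) (cp_edge m) 2 i j"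
    then have "gdist (cp_vertices m) (cp_edge m) i j = 2"
      using gdist2[OF iV jV] by simp
    then show ?thesis using c by simp
  qed
qed

lemma cp_conn: "m \<ge> 2 \<Longrightarrow> connected_graph (cp_vertices m) (cp_edge m)"
  unfolding connected_graph_def
proof (intro ballI)
  fix i j assume m: "m \<ge> 2" and "i \<in> cp_vertices m" "j \<in> cp_vertices m"
  then have i: "i < 2*m" and j: "j < 2*m" unfolding cp_vertices_def by simp_all
  have iV: "i \<in> cp_vertices m" using i unfolding cp_vertices_def by simp
  have jV: "j \<in> cp_vertices m" using j unfolding cp_vertices_def by simp
  from cp_cases[OF m i j] show "\<exists>n. walk_of_len (cp_vertices m) (cp_edge m) n i j"
  proof (elim disjE)
    assume "j = i" then have "walk_of_len (cp_vertices m) (cp_edge m) 0 i j" using iV walk0[of "cp_vertices m" "cp_edge m" i j] by simp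
    then show ?thesis by (rule exI)
  next
    assume "cp_edge m i j" then have "walk_of_len (cp_vertices m) (cp_edge m) 1 i j" using iV jV walk1[of "cp_vertices m" "cp_edge m" i j] by simp
    then show ?thesis by (rule exI)
  next
    assume "j \<noteq> i \<and> \<not> cp_edge m i j \<and> walk_of_len (cp_vertices m) (cp_edge m) 2 i j"
    then have "walk_of_len (cp_vertices m) (cp_edge m) 2 i j" by simp
    then show ?thesis by (rule exI)
  qed
qed

lemma finS: "finite V \<Longrightarrow> finite {gdist V E x y | x y. x \<in> V \<and> y \<in> V}"
proof -
  assume fin: "finite V"
  let ?S = "{gdist V E x y | x y. x \<in> V \<and> y \<in> V}"
  have sub: "?S \<subseteq> (\<lambda>p. gdist V E (fst p) (snd p)) ` (V \<times> V)"
  proof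
    fix g assume "g \<in> ?S"
    then obtain x y where g: "g = gdist V E x y" "x \<in> V" "y \<in> V" by blast
    show "g \<in> (\<lambda>p. gdist V E (fst p) (snd p)) ` (V \<times> V)"
      by (rule image_eqI[of _ _ "(x, y)"]) (use g in auto)
  qed
  show "finite ?S" by (rule finite_subset[OF sub]) (use fin in simp)
qed

lemma cp_diam: "m \<ge> 2 \<Longrightarrow> diam (cp_vertices m) (cp_edge m) = 2"
  unfolding diam_def
proof (rule Max_eqI)
  assume m: "m \<ge> 2"
  show "finite {gdist (cp_vertices m) (cp_edge m) x y | x y. x \<in> cp_vertices m \<and> y \<in> cp_vertices m}"
    by (rule finS) (simp add: cp_vertices_def)
  show "y \<le> 2" if "y \<in> {gdist (cp_vertices m) (cp_edge m) x y | x y. x \<in> cp_vertices m \<and> y \<in> cp_vertices m}" for y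
  proof -
    from that obtain a b where ab: "y = gdist (cp_vertices m) (cp_edge m) a b" "a < 2*m" "b < 2*m"
      unfolding cp_vertices_def by blast
    show ?thesis unfolding ab(1) cp_dval[OF m ab(2,3)] by simp
  qed
  have "gdist (cp_vertices m) (cp_edge m) 0 1 = 2" using cp_dval[of m 0 1] m unfolding cp_edge_def by simp
  moreover have "(0::nat) \<in> cp_vertices m" "(1::nat) \<in> cp_vertices m" using m unfolding cp_vertices_def by simp_all
  ultimately show "2 \<in> {gdist (cp_vertices m) (cp_edge m) x y | x y. x \<in> cp_vertices m \<and> y \<in> cp_vertices m}"
    by force
qed


lemma cp_rowsum:
  assumes m: "m \<ge> 2" and i: "i < 2*m"
  shows "(\<Sum>j\<in>cp_vertices m. real (gdist (cp_vertices m) (cp_edge m) i j)) = real (2*m)"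
proof -
  let ?V = "cp_vertices m"
  have fin: "finite ?V" unfolding cp_vertices_def by simp
  have "(\<Sum>j\<in>?V. real (gdist ?V (cp_edge m) i j) * (\<lambda>_. 1) j) =
     (\<Sum>j\<in>{j\<in>?V. j \<noteq> i}. (\<lambda>_. 1::real) j) + (\<Sum>j\<in>{j\<in>?V. j \<noteq> i \<and> \<not> cp_edge m i j}. (\<lambda>_. 1::real) j)"
    by (rule rowsum[OF fin]) (use cp_dval[OF m i] in \<open>simp add: cp_vertices_def\<close>)
  moreover have "{j\<in>?V. j \<noteq> i} = ?V - {i}" by auto
  moreover have "card (?V - {i}) = 2*m - 1" using i unfolding cp_vertices_def by simp
  moreover have "{j\<in>?V. j \<noteq> i \<and> \<not> cp_edge m i j} = {if even i then i+1 else i-1}"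
  proof -
    have "j \<in> ?V \<and> j \<noteq> i \<and> \<not> cp_edge m i j \<longleftrightarrow> j = (if even i then i+1 else i-1)" for j
      unfolding cp_vertices_def cp_edge_def lessThan_iff by (rule cp_arith2[OF i])
    then show ?thesis by (intro set_eqI) simp
  qed
  ultimately have "(\<Sum>j\<in>?V. real (gdist ?V (cp_edge m) i j)) = real (2*m - 1) + 1" by simp
  also have "\<dots> = real (2*m)" using m by simp
  finally show ?thesis .
qed

lemma cp_bm: "m \<ge> 2 \<Longrightarrow> bonnet_myers_sharp (cp_vertices m) (cp_edge m)"
proof -
  assume m: "m \<ge> 2"
  let ?V = "cp_vertices m"
  let ?d = "\<lambda>i j. real (gdist ?V (cp_edge m) i j)"
  have fin: "finite ?V" unfolding cp_vertices_def by simp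
  have cV: "card ?V = 2*m" unfolding cp_vertices_def by simp
  have ne: "?V \<noteq> {}" using m unfolding cp_vertices_def by (auto simp: lessThan_empty_iff)
  have row: "(\<Sum>j\<in>?V. ?d i j) = real (2*m)" if "i \<in> ?V" for i
    using cp_rowsum[OF m] that unfolding cp_vertices_def by simp
  have sym: "?d i j = ?d j i" if "i \<in> ?V" "j \<in> ?V" for i j
  proof -
    have i: "i < 2*m" and j: "j < 2*m" using that unfolding cp_vertices_def by simp_all
    show ?thesis unfolding cp_dval[OF m i j] cp_dval[OF m j i] cp_edge_def by auto
  qed
  have sol1: "curv_solution ?V (cp_edge m) (\<lambda>_. 1)"
    unfolding curv_solution_def using row cV by simp
  have "(\<lambda>_. 1::real) ` ?V = {1}" using ne by auto
  then have min1: "Min ((\<lambda>_. 1::real) ` ?V) = 1" by simp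
  have bound: "Min (K' ` ?V) \<le> 1" if sK: "curv_solution ?V (cp_edge m) K'" for K'
  proof -
    have eq: "(\<Sum>j\<in>?V. ?d i j * K' j) = real (2*m)" if "i \<in> ?V" for i
      using sK that cV unfolding curv_solution_def by simp
    have "(\<Sum>i\<in>?V. \<Sum>j\<in>?V. ?d i j * K' j) = (\<Sum>i\<in>?V. real (2*m))"
      by (rule sum.cong) (simp_all add: eq)
    also have "\<dots> = real (2*m) * real (2*m)" using cV by simp
    finally have A: "(\<Sum>i\<in>?V. \<Sum>j\<in>?V. ?d i j * K' j) = real (2*m) * real (2*m)" .
    have "(\<Sum>i\<in>?V. \<Sum>j\<in>?V. ?d i j * K' j) = (\<Sum>j\<in>?V. \<Sum>i\<in>?V. ?d i j * K' j)"
      by (rule sum.swap)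
    also have "\<dots> = (\<Sum>j\<in>?V. (\<Sum>i\<in>?V. ?d j i) * K' j)"
    proof (rule sum.cong)
      fix j assume jV: "j \<in> ?V"
      have "(\<Sum>i\<in>?V. ?d i j * K' j) = (\<Sum>i\<in>?V. ?d j i * K' j)"
        by (rule sum.cong) (simp_all add: sym[OF _ jV])
      also have "\<dots> = (\<Sum>i\<in>?V. ?d j i) * K' j" by (simp add: sum_distrib_right)
      finally show "(\<Sum>i\<in>?V. ?d i j * K' j) = (\<Sum>i\<in>?V. ?d j i) * K' j" .
    qed simp
    also have "\<dots> = (\<Sum>j\<in>?V. real (2*m) * K' j)"
      by (rule sum.cong) (simp_all add: row)
    also have "\<dots> = real (2*m) * (\<Sum>j\<in>?V. K' j)" by (simp add: sum_distrib_left)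
    finally have B: "(\<Sum>i\<in>?V. \<Sum>j\<in>?V. ?d i j * K' j) = real (2*m) * (\<Sum>j\<in>?V. K' j)" .
    have "real (2*m) * (\<Sum>j\<in>?V. K' j) = real (2*m) * real (2*m)" using A B by linarith
    then have sK': "(\<Sum>j\<in>?V. K' j) = real (2*m)" using m by simp
    have "(\<Sum>j\<in>?V. Min (K' ` ?V)) \<le> (\<Sum>j\<in>?V. K' j)"
      by (rule sum_mono) (use fin in simp)
    then have "real (2*m) * Min (K' ` ?V) \<le> real (2*m)" using cV sK' by simp
    then show ?thesis using m by simp
  qed
  have "steinerberger_curvature ?V (cp_edge m) (\<lambda>_. 1)"
    unfolding steinerberger_curvature_def using sol1 bound min1 by simp
  moreover have "Min ((\<lambda>_. 1::real) ` ?V) = 2 / real (diam ?V (cp_edge m))"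
    using min1 cp_diam[OF m] by simp
  ultimately show ?thesis unfolding bonnet_myers_sharp_def using sol1 by (intro conjI exI) (assumption+)
qed

theorem mainTheorem10:
  shows "(\<forall>(V::'a set) E. simple_graph V E \<and> connected_graph V E \<and> diam V E = 2 \<and>
            bonnet_myers_sharp V E \<longrightarrow>
            (\<exists>m\<ge>2. graph_iso V E (cp_vertices m) (cp_edge m)))
       \<and> (\<forall>m\<ge>2. simple_graph (cp_vertices m) (cp_edge m) \<and>
            connected_graph (cp_vertices m) (cp_edge m) \<and>
            diam (cp_vertices m) (cp_edge m) = 2 \<and>
            bonnet_myers_sharp (cp_vertices m) (cp_edge m))"
proof (intro conjI allI impI)
  fix V :: "'a set" and E
  assume "simple_graph V E \<and> connected_graph V E \<and> diam V E = 2 \<and> bonnet_myers_sharp V E"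
  then show "\<exists>m\<ge>2. graph_iso V E (cp_vertices m) (cp_edge m)" using dir1[of V E] by simp
next
  fix m :: nat assume m: "m \<ge> 2"
  show "simple_graph (cp_vertices m) (cp_edge m)" using m by (intro cp_sg) simp
  show "connected_graph (cp_vertices m) (cp_edge m)" by (rule cp_conn[OF m])
  show "diam (cp_vertices m) (cp_edge m) = 2" by (rule cp_diam[OF m])
  show "bonnet_myers_sharp (cp_vertices m) (cp_edge m)" by (rule cp_bm[OF m])
qed

end
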